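(* Let $\mathcal{D}\subseteq\mathbb{R}^m$ be a nonempty polyhedron, $c,d\in\mathbb{R}^m$, and $f(\delta):=\inf_{x\in\mathcal{D}}(c-\delta d)^\top x$. Assume that there exists $\delta'\in\operatorname{dom}(f)$ such that $f(\delta')=(c-\delta'd)^\top x'\le0$ for some $x'\in\mathcal{D}$ with $d^\top x'>0$. If $f$ has a root, then the optimal value of the problem $\inf\ c^\top x/d^\top x$ subject to $d^\top x>0$, $x\in\mathcal{D}$, equals the largest root of $f$ and is attained. Otherwise, this optimal value is $-\infty$.
   Context: $\operatorname{dom}(f):=\{\delta: -\infty<f(\delta)<\infty\}$. *)

theory Defs
  imports "HOL-Analysis.Analysis"
begin

definition param_val :: "(real^'m) set \<Rightarrow> real^'m \<Rightarrow> real^'m \<Rightarrow> real \<Rightarrow> ereal" where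
  "param_val D c d \<delta> = (INF x\<in>D. ereal ((c - \<delta> *\<^sub>R d) \<bullet> x))"

definition param_dom :: "(real \<Rightarrow> ereal) \<Rightarrow> real set" where
  "param_dom f = {\<delta>. - \<infinity> < f \<delta> \<and> f \<delta> < \<infinity>}"

definition frac_val :: "(real^'m) set \<Rightarrow> real^'m \<Rightarrow> real^'m \<Rightarrow> ereal" where
  "frac_val D c d = (INF x\<in>{x\<in>D. d \<bullet> x > 0}. ereal ((c \<bullet> x) / (d \<bullet> x)))"

end

theory Submission imports Defs begin
lemma lp_ray_frontier:
  fixes S :: "'a::euclidean_space set"
  assumes pS: "polyhedron S" and low: "\<forall>x\<in>S. L \<le> w \<bullet> x"
    and xS: "x \<in> S" and yS: "y \<in> S" and lt: "w \<bullet> y < w \<bullet> x"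
  shows "\<exists>z\<in>S - rel_interior S. w \<bullet> z < w \<bullet> x"
proof -
  define T where "T = {t. 0 \<le> t \<and> x + t *\<^sub>R (y - x) \<in> S}"
  define B where "B = (w \<bullet> x - L) / (w \<bullet> x - w \<bullet> y)"
  have pos: "w \<bullet> x - w \<bullet> y > 0" using lt by simp
  have TB: "T \<subseteq> {0..B}"
  proof
    fix t assume "t \<in> T"
    hence t0: "0 \<le> t" and "x + t *\<^sub>R (y - x) \<in> S" by (auto simp: T_def)
    hence "L \<le> w \<bullet> (x + t *\<^sub>R (y - x))" using low by blast
    hence "L \<le> w \<bullet> x - t * (w \<bullet> x - w \<bullet> y)" by (simp add: inner_add_right inner_diff_right algebra_simps)
    hence "t * (w \<bullet> x - w \<bullet> y) \<le> w \<bullet> x - L" by simp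
    hence "t \<le> B" using pos unfolding B_def by (simp add: pos_le_divide_eq)
    thus "t \<in> {0..B}" using t0 by simp
  qed
  have cl: "closed T"
  proof -
    have "T = {0..} \<inter> (\<lambda>t. x + t *\<^sub>R (y - x)) -` S" by (auto simp: T_def)
    moreover have "closed ((\<lambda>t. x + t *\<^sub>R (y - x)) -` S)"
      by (rule continuous_closed_vimage) (auto intro!: continuous_intros polyhedron_imp_closed pS)
    ultimately show ?thesis by (auto intro: closed_Int)
  qed
  have "compact T" using cl TB by (meson bounded_subset bounded_closed_interval compact_eq_bounded_closed)
  moreover have "1 \<in> T" using yS by (simp add: T_def)
  ultimately obtain ts where tsT: "ts \<in> T" and tsmax: "\<forall>t\<in>T. t \<le> ts"
    using compact_attains_sup by (metis empty_iff)
  have ts1: "ts \<ge> 1" using tsmax \<open>1 \<in> T\<close> by blast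
  define z where "z = x + ts *\<^sub>R (y - x)"
  have zS: "z \<in> S" using tsT by (simp add: T_def z_def)
  have "z \<notin> rel_interior S"
  proof
    assume "z \<in> rel_interior S"
    then obtain e where e1: "e > 1" and "(1 - e) *\<^sub>R x + e *\<^sub>R z \<in> S"
      using convex_rel_interior_iff[of S z] polyhedron_imp_convex[OF pS] xS by blast
    moreover have "(1 - e) *\<^sub>R x + e *\<^sub>R z = x + (e * ts) *\<^sub>R (y - x)"
      by (simp add: z_def algebra_simps)
    ultimately have "e * ts \<in> T" using ts1 by (simp add: T_def)
    hence "e * ts \<le> ts" using tsmax by blast
    thus False using e1 ts1 by (simp add: mult_le_cancel_right1)
  qed
  moreover have "w \<bullet> z < w \<bullet> x"
  proof -
    have "w \<bullet> z = w \<bullet> x - ts * (w \<bullet> x - w \<bullet> y)"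
      by (simp add: z_def inner_add_right inner_diff_right algebra_simps)
    moreover have "ts * (w \<bullet> x - w \<bullet> y) \<ge> 1 * (w \<bullet> x - w \<bullet> y)"
      using ts1 pos by (intro mult_right_mono) auto
    ultimately show ?thesis using pos by simp
  qed
  ultimately show ?thesis using zS by blast
qed

lemma lp_attain_aux:
  fixes w :: "'a::euclidean_space"
  shows "\<forall>S::'a set. nat (aff_dim S) = n \<longrightarrow> polyhedron S \<longrightarrow> S \<noteq> {} \<longrightarrow> (\<forall>x\<in>S. L \<le> w \<bullet> x)
          \<longrightarrow> (\<exists>x\<in>S. \<forall>y\<in>S. w \<bullet> x \<le> w \<bullet> y)"
proof (induction n rule: less_induct)
  case (less n)
  show ?case
  proof (intro allI impI)
    fix S :: "'a set"
    assume nS: "nat (aff_dim S) = n" and pS: "polyhedron S" and ne: "S \<noteq> {}"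
      and low: "\<forall>x\<in>S. L \<le> w \<bullet> x"
    show "\<exists>x\<in>S. \<forall>y\<in>S. w \<bullet> x \<le> w \<bullet> y"
    proof (rule ccontr)
      assume nomin: "\<not> ?thesis"
      have claim: "\<forall>x\<in>S. \<exists>z\<in>S - rel_interior S. w \<bullet> z < w \<bullet> x"
      proof
        fix x assume xS: "x \<in> S"
        then obtain y where "y \<in> S" "w \<bullet> y < w \<bullet> x" using nomin by (meson not_le)
        thus "\<exists>z\<in>S - rel_interior S. w \<bullet> z < w \<bullet> x"
          using lp_ray_frontier[OF pS low xS] by blast
      qed
      define Fs where "Fs = {F. F facet_of S}"
      have finF: "finite Fs" using finite_polyhedron_facets[OF pS] by (simp add: Fs_def)
      have bd: "S - rel_interior S = \<Union> Fs" using rel_boundary_of_polyhedron[OF pS] by (simp add: Fs_def)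
      have ad: "aff_dim S \<ge> 0" using ne aff_dim_negative_iff[of S] by linarith
      have minF: "\<exists>m\<in>G. \<forall>y\<in>G. w \<bullet> m \<le> w \<bullet> y" if "G \<in> Fs" for G
      proof -
        have fG: "G facet_of S" using that by (simp add: Fs_def)
        hence GS: "G \<subseteq> S" and Gne: "G \<noteq> {}" and adG: "aff_dim G = aff_dim S - 1"
          by (auto simp: facet_of_def face_of_imp_subset)
        have "aff_dim G \<ge> 0" using Gne aff_dim_negative_iff[of G] by linarith
        hence "nat (aff_dim G) < n" using adG nS ad by linarith
        moreover have "polyhedron G"
          using face_of_polyhedron_polyhedron[OF pS facet_of_imp_face_of[OF fG]] .
        ultimately show ?thesis using less.IH Gne GS low by blast
      qed
      then obtain m where m: "\<And>G. G \<in> Fs \<Longrightarrow> m G \<in> G \<and> (\<forall>y\<in>G. w \<bullet> m G \<le> w \<bullet> y)"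
        by metis
      obtain x0 where "x0 \<in> S" using ne by blast
      then obtain z0 where "z0 \<in> \<Union> Fs" using claim bd by blast
      hence Fne: "Fs \<noteq> {}" by blast
      define W where "W = (\<lambda>G. w \<bullet> m G) ` Fs"
      have "Min W \<in> W" using finF Fne by (simp add: W_def)
      then obtain G0 where G0: "G0 \<in> Fs" and G0min: "w \<bullet> m G0 = Min W" by (auto simp: W_def)
      have "m G0 \<in> S" using m[OF G0] G0 facet_of_imp_subset by (auto simp: Fs_def)
      moreover have "\<forall>y\<in>S. w \<bullet> m G0 \<le> w \<bullet> y"
      proof
        fix y assume "y \<in> S"
        then obtain z where "z \<in> \<Union> Fs" and zy: "w \<bullet> z < w \<bullet> y" using claim bd by blast
        then obtain G where G: "G \<in> Fs" "z \<in> G" by blast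
        have "w \<bullet> m G \<le> w \<bullet> z" using m[OF G(1)] G(2) by blast
        moreover have "Min W \<le> w \<bullet> m G" using finF G(1) by (simp add: W_def)
        ultimately show "w \<bullet> m G0 \<le> w \<bullet> y" using zy G0min by linarith
      qed
      ultimately show False using nomin by blast
    qed
  qed
qed

lemma lp_attain:
  fixes S :: "'a::euclidean_space set"
  assumes "polyhedron S" "S \<noteq> {}" "\<forall>x\<in>S. L \<le> w \<bullet> x"
  shows "\<exists>x\<in>S. \<forall>y\<in>S. w \<bullet> x \<le> w \<bullet> y"
  using lp_attain_aux[of "nat (aff_dim S)" L w] assms by blast

lemma frac_attain:
  fixes D :: "(real^'m) set" and c d x' :: "real^'m"
  assumes pD: "polyhedron D" and x'D: "x' \<in> D" and dx': "d \<bullet> x' > 0"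
    and hx': "(c - \<delta>' *\<^sub>R d) \<bullet> x' \<le> 0"
    and low': "\<forall>z\<in>D. (c - \<delta>' *\<^sub>R d) \<bullet> x' \<le> (c - \<delta>' *\<^sub>R d) \<bullet> z"
    and L: "\<forall>x\<in>D. d \<bullet> x > 0 \<longrightarrow> L \<le> (c \<bullet> x) / (d \<bullet> x)"
  shows "\<exists>xs\<in>D. d \<bullet> xs > 0 \<and> (\<forall>x\<in>D. d \<bullet> x > 0 \<longrightarrow> (c \<bullet> xs) / (d \<bullet> xs) \<le> (c \<bullet> x) / (d \<bullet> x))"
proof -
  obtain F where finF: "finite F" and DF: "D = \<Inter> F"
    and hF: "\<forall>h\<in>F. \<exists>a b. a \<noteq> 0 \<and> h = {x. a \<bullet> x \<le> b}"
    using pD unfolding polyhedron_def by blast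
  have "\<forall>h\<in>F. \<exists>ab. h = {x. fst ab \<bullet> x \<le> snd ab}" using hF by fastforce
  then obtain AB where AB: "\<forall>h\<in>F. h = {x. fst (AB h) \<bullet> x \<le> snd (AB h)}" by metis
  define A where "A h = fst (AB h)" for h
  define B where "B h = snd (AB h)" for h
  have memD: "x \<in> D \<longleftrightarrow> (\<forall>h\<in>F. A h \<bullet> x \<le> B h)" for x
    using AB unfolding DF A_def B_def by blast
  define P :: "((real^'m) \<times> real) set" where
    "P = {p. 0 \<le> snd p \<and> d \<bullet> fst p = 1 \<and> (\<forall>h\<in>F. A h \<bullet> fst p \<le> snd p * B h)}"
  have Peq: "P = {p. (0, -1) \<bullet> p \<le> (0::real)} \<inter> {p. (d, 0) \<bullet> p = 1}
      \<inter> \<Inter> ((\<lambda>h. {p. (A h, - B h) \<bullet> p \<le> 0}) ` F)"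
    by (auto simp: P_def inner_prod_def mult.commute)
  have pP: "polyhedron P" unfolding Peq
    by (intro polyhedron_Int polyhedron_halfspace_le polyhedron_hyperplane polyhedron_Inter)
       (auto simp: finF polyhedron_halfspace_le)
  define g where "g = c - \<delta>' *\<^sub>R d"
  have rec: "\<delta>' \<le> c \<bullet> fst p" if "p \<in> P" "snd p = 0" for p
  proof -
    have "\<forall>h\<in>F. A h \<bullet> fst p \<le> 0" using that by (simp add: P_def)
    hence "\<forall>h\<in>F. A h \<bullet> (x' + fst p) \<le> B h" using x'D unfolding memD
      by (simp add: inner_add_right) (smt (verit))
    hence "x' + fst p \<in> D" by (simp add: memD)
    hence "g \<bullet> x' \<le> g \<bullet> (x' + fst p)" using low' by (simp add: g_def)
    hence "0 \<le> g \<bullet> fst p" by (simp add: inner_add_right)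
    moreover have "d \<bullet> fst p = 1" using that by (simp add: P_def)
    ultimately show ?thesis by (simp add: g_def inner_diff_left)
  qed
  have ratio_le: "(c \<bullet> x') / (d \<bullet> x') \<le> \<delta>'"
  proof -
    have "c \<bullet> x' \<le> \<delta>' * (d \<bullet> x')" using hx' by (simp add: inner_diff_left)
    thus ?thesis using dx' by (simp add: divide_le_eq)
  qed
  define q where "q x = ((1 / (d \<bullet> x)) *\<^sub>R x, 1 / (d \<bullet> x))" for x
  have qP: "q x \<in> P" and qv: "(c, 0) \<bullet> q x = (c \<bullet> x) / (d \<bullet> x)" if "x \<in> D" "d \<bullet> x > 0" for x
  proof -
    have "\<forall>h\<in>F. A h \<bullet> x \<le> B h" using that memD by blast
    hence "\<forall>h\<in>F. (A h \<bullet> x) / (d \<bullet> x) \<le> B h / (d \<bullet> x)" using that(2)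
      by (simp add: divide_right_mono)
    thus "q x \<in> P" using that(2) by (simp add: q_def P_def)
    show "(c, 0) \<bullet> q x = (c \<bullet> x) / (d \<bullet> x)" by (simp add: q_def inner_prod_def)
  qed
  have lowP: "\<forall>p\<in>P. min L \<delta>' \<le> (c, 0) \<bullet> p"
  proof
    fix p assume pP': "p \<in> P"
    obtain y t where pyt: "p = (y, t)" by fastforce
    show "min L \<delta>' \<le> (c, 0) \<bullet> p"
    proof (cases "t = 0")
      case True
      thus ?thesis using rec[OF pP'] pyt by (simp add: inner_prod_def)
    next
      case False
      hence tpos: "t > 0" using pP' pyt by (simp add: P_def)
      define x where "x = (1 / t) *\<^sub>R y"
      have "\<forall>h\<in>F. A h \<bullet> y \<le> t * B h" using pP' pyt by (simp add: P_def)
      hence "\<forall>h\<in>F. A h \<bullet> x \<le> B h" using tpos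
        by (simp add: x_def divide_le_eq mult.commute)
      hence xD: "x \<in> D" by (simp add: memD)
      have dy: "d \<bullet> y = 1" using pP' pyt by (simp add: P_def)
      hence dx: "d \<bullet> x = 1 / t" by (simp add: x_def)
      have "(c \<bullet> x) / (d \<bullet> x) = c \<bullet> y" using tpos dx by (simp add: x_def)
      hence "L \<le> c \<bullet> y" using L xD dx tpos by force
      thus ?thesis using pyt by (simp add: inner_prod_def)
    qed
  qed
  have "P \<noteq> {}" using qP[OF x'D dx'] by blast
  then obtain ps where psP: "ps \<in> P" and psmin: "\<forall>p\<in>P. (c, 0) \<bullet> ps \<le> (c, 0) \<bullet> p"
    using lp_attain[OF pP _ lowP] by blast
  obtain ys ts where pys: "ps = (ys, ts)" by fastforce
  have bnd: "c \<bullet> ys \<le> (c \<bullet> x) / (d \<bullet> x)" if "x \<in> D" "d \<bullet> x > 0" for x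
    using psmin qP[OF that] qv[OF that] pys by (force simp: inner_prod_def)
  show ?thesis
  proof (cases "ts = 0")
    case True
    hence "\<delta>' \<le> c \<bullet> ys" using rec psP pys by force
    thus ?thesis using bnd ratio_le x'D dx' by force
  next
    case False
    hence tpos: "ts > 0" using psP pys by (simp add: P_def)
    define xs where "xs = (1 / ts) *\<^sub>R ys"
    have "\<forall>h\<in>F. A h \<bullet> ys \<le> ts * B h" using psP pys by (simp add: P_def)
    hence "\<forall>h\<in>F. A h \<bullet> xs \<le> B h" using tpos
      by (simp add: xs_def divide_le_eq mult.commute)
    hence xD: "xs \<in> D" by (simp add: memD)
    have dy: "d \<bullet> ys = 1" using psP pys by (simp add: P_def)
    hence dx: "d \<bullet> xs = 1 / ts" by (simp add: xs_def)
    have "(c \<bullet> xs) / (d \<bullet> xs) = c \<bullet> ys" using tpos dx by (simp add: xs_def)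
    thus ?thesis using xD dx tpos bnd by force
  qed
qed

lemma pv_le: "z \<in> D \<Longrightarrow> param_val D c d \<delta> \<le> ereal ((c - \<delta> *\<^sub>R d) \<bullet> z)"
  unfolding param_val_def by (rule INF_lower)

lemma root_le:
  assumes "param_val D c d \<delta> = 0" "x \<in> D" "d \<bullet> x > 0"
  shows "\<delta> \<le> (c \<bullet> x) / (d \<bullet> x)"
proof -
  have "0 \<le> ereal ((c - \<delta> *\<^sub>R d) \<bullet> x)" using pv_le[OF assms(2), of c d \<delta>] assms(1) by simp
  hence "\<delta> * (d \<bullet> x) \<le> c \<bullet> x" by (simp add: inner_diff_left)
  thus ?thesis using assms(3) by (simp add: le_divide_eq)
qed

lemma min_root:
  fixes D :: "(real^'m) set"
  assumes cD: "convex D" and xsD: "xs \<in> D" and dxs: "d \<bullet> xs > 0"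
    and mn: "\<forall>x\<in>D. d \<bullet> x > 0 \<longrightarrow> (c \<bullet> xs) / (d \<bullet> xs) \<le> (c \<bullet> x) / (d \<bullet> x)"
  shows "param_val D c d ((c \<bullet> xs) / (d \<bullet> xs)) = 0"
proof -
  define r where "r = (c \<bullet> xs) / (d \<bullet> xs)"
  have hxs: "(c - r *\<^sub>R d) \<bullet> xs = 0" using dxs by (simp add: r_def inner_diff_left)
  have nn: "0 \<le> (c - r *\<^sub>R d) \<bullet> z" if zD: "z \<in> D" for z
  proof (rule ccontr)
    assume neg: "\<not> ?thesis"
    define t where "t = (d \<bullet> xs) / (2 * (d \<bullet> xs + \<bar>d \<bullet> z\<bar>))"
    have t0: "t > 0" using dxs by (simp add: t_def)
    have t1: "t \<le> 1"
      using dxs by (simp add: t_def divide_le_eq)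
    define y where "y = (1 - t) *\<^sub>R xs + t *\<^sub>R z"
    have yD: "y \<in> D" using cD xsD zD t0 t1 by (simp add: y_def convex_def)
    have "d \<bullet> y = d \<bullet> xs - t * (d \<bullet> xs - d \<bullet> z)" by (simp add: y_def inner_add_right algebra_simps)
    moreover have "t * (d \<bullet> xs - d \<bullet> z) \<le> t * (d \<bullet> xs + \<bar>d \<bullet> z\<bar>)"
      using t0 by (intro mult_left_mono) auto
    moreover have "t * (d \<bullet> xs + \<bar>d \<bullet> z\<bar>) = (d \<bullet> xs) / 2"
    proof -
      have "d \<bullet> xs + \<bar>d \<bullet> z\<bar> > 0" using dxs by simp
      thus ?thesis by (simp add: t_def field_simps)
    qed
    ultimately have dy: "d \<bullet> y > 0" using dxs by linarith
    have "(c - r *\<^sub>R d) \<bullet> y = (1 - t) * ((c - r *\<^sub>R d) \<bullet> xs) + t * ((c - r *\<^sub>R d) \<bullet> z)"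
      by (simp add: y_def inner_add_right)
    also have "\<dots> < 0" using hxs neg t0 by (simp add: mult_pos_neg)
    finally have "c \<bullet> y < r * (d \<bullet> y)" by (simp add: inner_diff_left)
    hence "(c \<bullet> y) / (d \<bullet> y) < r" using dy by (simp add: divide_less_eq)
    thus False using mn yD dy by (force simp: r_def)
  qed
  have "param_val D c d r = 0"
    unfolding param_val_def
  proof (rule antisym)
    show "(INF x\<in>D. ereal ((c - r *\<^sub>R d) \<bullet> x)) \<le> 0"
      using INF_lower[OF xsD, of "\<lambda>x. ereal ((c - r *\<^sub>R d) \<bullet> x)"] hxs by (simp add: zero_ereal_def)
    show "0 \<le> (INF x\<in>D. ereal ((c - r *\<^sub>R d) \<bullet> x))"
      by (rule INF_greatest) (use nn in simp)
  qed
  thus ?thesis by (simp add: r_def)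
qed

lemma frac_eq:
  assumes xsD: "xs \<in> D" and dxs: "d \<bullet> xs > 0"
    and mn: "\<forall>x\<in>D. d \<bullet> x > 0 \<longrightarrow> (c \<bullet> xs) / (d \<bullet> xs) \<le> (c \<bullet> x) / (d \<bullet> x)"
  shows "frac_val D c d = ereal ((c \<bullet> xs) / (d \<bullet> xs))"
  unfolding frac_val_def
proof (rule antisym)
  show "(INF x\<in>{x \<in> D. 0 < d \<bullet> x}. ereal (c \<bullet> x / (d \<bullet> x))) \<le> ereal (c \<bullet> xs / (d \<bullet> xs))"
    by (rule INF_lower) (use xsD dxs in simp)
  show "ereal (c \<bullet> xs / (d \<bullet> xs)) \<le> (INF x\<in>{x \<in> D. 0 < d \<bullet> x}. ereal (c \<bullet> x / (d \<bullet> x)))"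
    by (rule INF_greatest) (use mn in simp)
qed

theorem lemma3p9:
  fixes D :: "(real^'m) set" and c d :: "real^'m"
  assumes "polyhedron D" and "D \<noteq> {}"
    and "\<exists>\<delta>' x'. \<delta>' \<in> param_dom (param_val D c d) \<and> x' \<in> D \<and>
           param_val D c d \<delta>' = ereal ((c - \<delta>' *\<^sub>R d) \<bullet> x') \<and>
           (c - \<delta>' *\<^sub>R d) \<bullet> x' \<le> 0 \<and> d \<bullet> x' > 0"
  shows "((\<exists>\<delta>. param_val D c d \<delta> = 0) \<longrightarrow>
            (\<exists>r. param_val D c d r = 0 \<and> (\<forall>\<delta>. param_val D c d \<delta> = 0 \<longrightarrow> \<delta> \<le> r) \<and>
                 frac_val D c d = ereal r \<and>
                 (\<exists>x\<in>D. d \<bullet> x > 0 \<and> (c \<bullet> x) / (d \<bullet> x) = r)))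
       \<and> ((\<nexists>\<delta>. param_val D c d \<delta> = 0) \<longrightarrow> frac_val D c d = - \<infinity>)"
proof -
  obtain \<delta>' x' where x'D: "x' \<in> D" and pv': "param_val D c d \<delta>' = ereal ((c - \<delta>' *\<^sub>R d) \<bullet> x')"
    and hx': "(c - \<delta>' *\<^sub>R d) \<bullet> x' \<le> 0" and dx': "d \<bullet> x' > 0"
    using assms(3) by blast
  have low': "\<forall>z\<in>D. (c - \<delta>' *\<^sub>R d) \<bullet> x' \<le> (c - \<delta>' *\<^sub>R d) \<bullet> z"
    using pv_le[of _ D c d \<delta>'] pv' by simp
  have cD: "convex D" using assms(1) by (rule polyhedron_imp_convex)
  note FA = frac_attain[OF assms(1) x'D dx' hx' low']
  have key: "\<exists>r. param_val D c d r = 0 \<and> (\<forall>\<delta>. param_val D c d \<delta> = 0 \<longrightarrow> \<delta> \<le> r) \<and>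
                 frac_val D c d = ereal r \<and> (\<exists>x\<in>D. d \<bullet> x > 0 \<and> (c \<bullet> x) / (d \<bullet> x) = r)"
    if Lh: "\<forall>x\<in>D. d \<bullet> x > 0 \<longrightarrow> L \<le> (c \<bullet> x) / (d \<bullet> x)" for L
  proof -
    obtain xs where xsD: "xs \<in> D" and dxs: "d \<bullet> xs > 0"
      and mn: "\<forall>x\<in>D. d \<bullet> x > 0 \<longrightarrow> (c \<bullet> xs) / (d \<bullet> xs) \<le> (c \<bullet> x) / (d \<bullet> x)"
      using FA[OF Lh] by blast
    show ?thesis
      apply (rule exI[of _ "(c \<bullet> xs) / (d \<bullet> xs)"])
      using min_root[OF cD xsD dxs mn] frac_eq[OF xsD dxs mn] root_le[OF _ xsD dxs] xsD dxs
      by blast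
  qed
  show ?thesis
  proof (intro conjI impI)
    assume "\<exists>\<delta>. param_val D c d \<delta> = 0"
    then obtain \<delta>0 where "param_val D c d \<delta>0 = 0" by blast
    thus "\<exists>r. param_val D c d r = 0 \<and> (\<forall>\<delta>. param_val D c d \<delta> = 0 \<longrightarrow> \<delta> \<le> r) \<and>
                 frac_val D c d = ereal r \<and> (\<exists>x\<in>D. d \<bullet> x > 0 \<and> (c \<bullet> x) / (d \<bullet> x) = r)"
      using key root_le by blast
  next
    assume nr: "\<nexists>\<delta>. param_val D c d \<delta> = 0"
    show "frac_val D c d = - \<infinity>"
    proof (rule ccontr)
      assume ninf: "frac_val D c d \<noteq> - \<infinity>"
      have "frac_val D c d \<le> ereal ((c \<bullet> x') / (d \<bullet> x'))"
        unfolding frac_val_def by (rule INF_lower) (use x'D dx' in simp)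
      with ninf obtain v where v: "frac_val D c d = ereal v"
        by (cases "frac_val D c d") auto
      have "\<forall>x\<in>D. d \<bullet> x > 0 \<longrightarrow> v \<le> (c \<bullet> x) / (d \<bullet> x)"
      proof (intro ballI impI)
        fix x assume "x \<in> D" "d \<bullet> x > 0"
        hence "frac_val D c d \<le> ereal ((c \<bullet> x) / (d \<bullet> x))"
          unfolding frac_val_def by (intro INF_lower) simp
        thus "v \<le> (c \<bullet> x) / (d \<bullet> x)" using v by simp
      qed
      from key[OF this] nr show False by blast
    qed
  qed
qed

end
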